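(* Let $n\ge 3$, let $q_1,\dots,q_n,r_1,\dots,r_n$ be positive integers, and let $H$ be a finite simple graph without a universal vertex. Then $${\rm dim}_s\big(K_{n,n}^{-M}(q_1,\dots,q_n,r_1,\dots,r_n)\diamond H\big)=\sum_{i=1}^{n}\Big((q_i+r_i)\sum_{j=1}^{k(H)}t_j(H)\Big)-n\,k(H).$$
   Context: The modular product $G\diamond H$ has vertex set $V(G)\times V(H)$; distinct vertices $(g,h)$ and $(g',h')$ are adjacent iff ($g=g'$ and $hh'\in E(H)$), or ($gg'\in E(G)$ and $h=h'$), or ($gg'\in E(G)$ and $hh'\in E(H)$), or ($g\neq g'$, $h\neq h'$, $gg'\notin E(G)$ and $hh'\notin E(H)$). $K_{n,n}^{-M}(q_1,\dots,q_n,r_1,\dots,r_n)$ is the graph whose vertex set is a disjoint union of sets $X_1,\dots,X_n,Y_1,\dots,Y_n$ with $|X_i|=q_i$, $|Y_i|=r_i$, where each $X_i$ and each $Y_i$ induces a clique, every vertex of $X_i$ is adjacent to every vertex of $Y_j$ whenever $i\neq j$, and there are no other edges (when all $q_i=r_i=1$ this is $K_{n,n}$ minus a perfect matching, denoted $K_{n,n}^{-M}$). A vertex is universal if its closed neighborhood is the whole vertex set. Vertices $h,h'$ are twins if $N_H[h]=N_H[h']$ (an equivalence relation). A $\gamma_H$-pair is a set $\{h,h'\}$ of two distinct vertices with $N_H[h]\cap N_H[h']=\emptyset$ and $N_H[h]\cup N_H[h']=V(H)$. Let $T_1(H),\dots,T_{k(H)}(H)$ be the following partition of $V(H)$: each twin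 class of vertices not belonging to any $\gamma_H$-pair is one part, and for each $\gamma_H$-pair $\{h,h'\}$ the union of the twin class of $h$ and the twin class of $h'$ is one part; $k(H)$ is the number of parts and $t_j(H)=|T_j(H)|$. For a connected graph $X$, a vertex $z$ strongly resolves distinct vertices $x,y$ if $d_X(y,z)=d_X(y,x)+d_X(x,z)$ or $d_X(x,z)=d_X(x,y)+d_X(y,z)$; ${\rm dim}_s(X)$ is the minimum cardinality of a set $S\subseteq V(X)$ such that every pair of distinct vertices is strongly resolved by some vertex of $S$. *)

theory Defs
  imports Main
begin

definition sgraph :: "'a set \<Rightarrow> ('a \<Rightarrow> 'a \<Rightarrow> bool) \<Rightarrow> bool" where
  "sgraph V E \<longleftrightarrow> finite V \<and> (\<forall>x y. E x y \<longrightarrow> E y x) \<and> (\<forall>x. \<not> E x x)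
     \<and> (\<forall>x y. E x y \<longrightarrow> x \<in> V \<and> y \<in> V)"

definition closed_nbhd :: "'a set \<Rightarrow> ('a \<Rightarrow> 'a \<Rightarrow> bool) \<Rightarrow> 'a \<Rightarrow> 'a set" where
  "closed_nbhd V E h = {h} \<union> {h' \<in> V. E h h'}"

definition universal_vertex :: "'a set \<Rightarrow> ('a \<Rightarrow> 'a \<Rightarrow> bool) \<Rightarrow> 'a \<Rightarrow> bool" where
  "universal_vertex V E h \<longleftrightarrow> h \<in> V \<and> closed_nbhd V E h = V"

definition mod_prod_edge ::
  "('a \<Rightarrow> 'a \<Rightarrow> bool) \<Rightarrow> ('b \<Rightarrow> 'b \<Rightarrow> bool) \<Rightarrow> 'a \<times> 'b \<Rightarrow> 'a \<times> 'b \<Rightarrow> bool" where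
  "mod_prod_edge EG EH = (\<lambda>(g, h) (g', h'). (g, h) \<noteq> (g', h') \<and>
      ((g = g' \<and> EH h h') \<or> (EG g g' \<and> h = h') \<or> (EG g g' \<and> EH h h')
       \<or> (g \<noteq> g' \<and> h \<noteq> h' \<and> \<not> EG g g' \<and> \<not> EH h h')))"

definition mod_prod_vert :: "'a set \<Rightarrow> 'b set \<Rightarrow> ('a \<times> 'b) set" where
  "mod_prod_vert VG VH = VG \<times> VH"

text \<open>The graph K_{n,n}^{-M}(q_1..q_n, r_1..r_n). Vertex (False, i, a) with a < q i is in X_i,
  vertex (True, i, a) with a < r i is in Y_i, for 1 \<le> i \<le> n.\<close>

definition KnnM_vert :: "nat \<Rightarrow> (nat \<Rightarrow> nat) \<Rightarrow> (nat \<Rightarrow> nat) \<Rightarrow> (bool \<times> nat \<times> nat) set" where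
  "KnnM_vert n q r = {(False, i, a) | i a. i \<in> {1..n} \<and> a < q i}
                   \<union> {(True, i, a) | i a. i \<in> {1..n} \<and> a < r i}"

definition KnnM_edge :: "nat \<Rightarrow> (nat \<Rightarrow> nat) \<Rightarrow> (nat \<Rightarrow> nat) \<Rightarrow>
    (bool \<times> nat \<times> nat) \<Rightarrow> (bool \<times> nat \<times> nat) \<Rightarrow> bool" where
  "KnnM_edge n q r x y \<longleftrightarrow> x \<in> KnnM_vert n q r \<and> y \<in> KnnM_vert n q r \<and> x \<noteq> y \<and>
     ((fst x = fst y \<and> fst (snd x) = fst (snd y)) \<or>
      (fst x \<noteq> fst y \<and> fst (snd x) \<noteq> fst (snd y)))"

definition is_walk :: "'a set \<Rightarrow> ('a \<Rightarrow> 'a \<Rightarrow> bool) \<Rightarrow> 'a list \<Rightarrow> bool" where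
  "is_walk V E p \<longleftrightarrow> p \<noteq> [] \<and> set p \<subseteq> V \<and> (\<forall>i < length p - 1. E (p ! i) (p ! Suc i))"

definition connected_graph :: "'a set \<Rightarrow> ('a \<Rightarrow> 'a \<Rightarrow> bool) \<Rightarrow> bool" where
  "connected_graph V E \<longleftrightarrow> (\<forall>x\<in>V. \<forall>y\<in>V. \<exists>p. is_walk V E p \<and> hd p = x \<and> last p = y)"

definition gdist :: "'a set \<Rightarrow> ('a \<Rightarrow> 'a \<Rightarrow> bool) \<Rightarrow> 'a \<Rightarrow> 'a \<Rightarrow> nat" where
  "gdist V E x y = (LEAST k. \<exists>p. is_walk V E p \<and> hd p = x \<and> last p = y \<and> length p = Suc k)"

definition strongly_resolves :: "'a set \<Rightarrow> ('a \<Rightarrow> 'a \<Rightarrow> bool) \<Rightarrow> 'a \<Rightarrow> 'a \<Rightarrow> 'a \<Rightarrow> bool" where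
  "strongly_resolves V E z x y \<longleftrightarrow>
     gdist V E y z = gdist V E y x + gdist V E x z \<or> gdist V E x z = gdist V E x y + gdist V E y z"

definition strong_resolving_set :: "'a set \<Rightarrow> ('a \<Rightarrow> 'a \<Rightarrow> bool) \<Rightarrow> 'a set \<Rightarrow> bool" where
  "strong_resolving_set V E S \<longleftrightarrow> S \<subseteq> V \<and>
     (\<forall>x\<in>V. \<forall>y\<in>V. x \<noteq> y \<longrightarrow> (\<exists>z\<in>S. strongly_resolves V E z x y))"

definition strong_metric_dim :: "'a set \<Rightarrow> ('a \<Rightarrow> 'a \<Rightarrow> bool) \<Rightarrow> nat" where
  "strong_metric_dim V E = (LEAST k. \<exists>S. strong_resolving_set V E S \<and> card S = k)"

definition twin_class :: "'a set \<Rightarrow> ('a \<Rightarrow> 'a \<Rightarrow> bool) \<Rightarrow> 'a \<Rightarrow> 'a set" where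
  "twin_class V E h = {h' \<in> V. closed_nbhd V E h' = closed_nbhd V E h}"

definition gamma_pair :: "'a set \<Rightarrow> ('a \<Rightarrow> 'a \<Rightarrow> bool) \<Rightarrow> 'a \<Rightarrow> 'a \<Rightarrow> bool" where
  "gamma_pair V E h h' \<longleftrightarrow> h \<in> V \<and> h' \<in> V \<and> h \<noteq> h' \<and>
     closed_nbhd V E h \<inter> closed_nbhd V E h' = {} \<and>
     closed_nbhd V E h \<union> closed_nbhd V E h' = V"

definition T_part :: "'a set \<Rightarrow> ('a \<Rightarrow> 'a \<Rightarrow> bool) \<Rightarrow> 'a \<Rightarrow> 'a set" where
  "T_part V E h = twin_class V E h \<union> \<Union>{twin_class V E h' | h'. gamma_pair V E h h'}"

definition T_partition :: "'a set \<Rightarrow> ('a \<Rightarrow> 'a \<Rightarrow> bool) \<Rightarrow> 'a set set" where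
  "T_partition V E = T_part V E ` V"

definition k_H :: "'a set \<Rightarrow> ('a \<Rightarrow> 'a \<Rightarrow> bool) \<Rightarrow> nat" where
  "k_H V E = card (T_partition V E)"

end

theory Submission
  imports Defs
begin

definition cX :: "('b \<Rightarrow> 'b \<Rightarrow> bool) \<Rightarrow> (bool \<times> nat \<times> nat) \<times> 'b \<Rightarrow> (bool \<times> nat \<times> nat) \<times> 'b \<Rightarrow> bool" where
  "cX EH x y = (((fst (fst x) = fst (fst y)) = (fst (snd (fst x)) = fst (snd (fst y))))
                 = (snd x = snd y \<or> EH (snd x) (snd y)))"

definition fl :: "(bool \<times> nat \<times> nat) \<times> 'b \<Rightarrow> (bool \<times> nat \<times> nat) \<times> 'b" where
  "fl x = ((\<not> fst (fst x), fst (snd (fst x)), 0), snd x)"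

lemma KV_mem: "((s, i, a) \<in> KnnM_vert n q r) \<longleftrightarrow> i \<in> {1..n} \<and> (if s then a < r i else a < q i)"
  unfolding KnnM_vert_def by auto

locale kprod =
  fixes n :: nat and q r :: "nat \<Rightarrow> nat" and VH :: "'b set" and EH :: "'b \<Rightarrow> 'b \<Rightarrow> bool"
  assumes n3: "n \<ge> 3" and pos: "\<forall>i\<in>{1..n}. q i > 0 \<and> r i > 0" and sg: "sgraph VH EH"
begin

abbreviation "V \<equiv> mod_prod_vert (KnnM_vert n q r) VH"
abbreviation "E \<equiv> mod_prod_edge (KnnM_edge n q r) EH"

lemma EH_sym: "EH a b \<Longrightarrow> EH b a" using sg unfolding sgraph_def by blast
lemma EH_irr: "\<not> EH a a" using sg unfolding sgraph_def by blast
lemma EH_V: "EH a b \<Longrightarrow> a \<in> VH \<and> b \<in> VH" using sg unfolding sgraph_def by blast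
lemma finVH: "finite VH" using sg unfolding sgraph_def by blast

lemma Vmem: "(((s,i,a),h) \<in> V) \<longleftrightarrow> i \<in> {1..n} \<and> (if s then a < r i else a < q i) \<and> h \<in> VH"
  unfolding mod_prod_vert_def using KV_mem by auto

lemma adj: assumes "x \<in> V" "y \<in> V" shows "E x y \<longleftrightarrow> x \<noteq> y \<and> cX EH x y"
proof -
  obtain s i a h where x: "x = ((s,i,a),h)" by (metis prod.exhaust)
  obtain s' i' a' h' where y: "y = ((s',i',a'),h')" by (metis prod.exhaust)
  show ?thesis using assms EH_irr unfolding x y mod_prod_edge_def KnnM_edge_def cX_def mod_prod_vert_def
    by auto
qed

lemma cX_refl: "cX EH x x" unfolding cX_def by auto
lemma cX_sym: "cX EH x y = cX EH y x" unfolding cX_def using EH_sym by auto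

lemma fl_V: "x \<in> V \<Longrightarrow> fl x \<in> V"
  using pos by (cases x) (auto simp: fl_def Vmem)

lemma cX_fl: "cX EH v (fl w) = (\<not> cX EH v w)"
  unfolding cX_def fl_def by auto

abbreviation "walkk k u v \<equiv> \<exists>p. is_walk V E p \<and> hd p = u \<and> last p = v \<and> length p = Suc k"

lemma walk0: "walkk 0 u v \<longleftrightarrow> u = v \<and> u \<in> V"
proof
  assume "walkk 0 u v"
  then obtain p where "is_walk V E p" "hd p = u" "last p = v" "length p = Suc 0" by blast
  then show "u = v \<and> u \<in> V" by (auto simp: is_walk_def length_Suc_conv)
next
  assume "u = v \<and> u \<in> V"
  then show "walkk 0 u v" by (intro exI[of _ "[u]"]) (auto simp: is_walk_def)
qed

lemma walk1: "walkk 1 u v \<longleftrightarrow> u \<in> V \<and> v \<in> V \<and> E u v"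
proof
  assume "walkk 1 u v"
  then obtain p where "is_walk V E p" "hd p = u" "last p = v" "length p = Suc (Suc 0)" by auto
  then show "u \<in> V \<and> v \<in> V \<and> E u v" by (auto simp: is_walk_def length_Suc_conv)
next
  assume "u \<in> V \<and> v \<in> V \<and> E u v"
  then show "walkk 1 u v" by (intro exI[of _ "[u,v]"]) (auto simp: is_walk_def)
qed

lemma walk2: "walkk 2 u v \<longleftrightarrow> (\<exists>w. u \<in> V \<and> w \<in> V \<and> v \<in> V \<and> E u w \<and> E w v)"
proof
  assume "walkk 2 u v"
  then obtain p where p: "is_walk V E p" "hd p = u" "last p = v" "length p = Suc (Suc (Suc 0))"
    by (auto simp: numeral_eq_Suc)
  then obtain a b c where abc: "p = [a,b,c]" by (auto simp: length_Suc_conv)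
  have "E (p!0) (p!Suc 0)" "E (p!Suc 0) (p!Suc (Suc 0))" using p(1,4) unfolding is_walk_def by auto
  then show "\<exists>w. u \<in> V \<and> w \<in> V \<and> v \<in> V \<and> E u w \<and> E w v" using p abc
    by (intro exI[of _ b]) (auto simp: is_walk_def)
next
  assume "\<exists>w. u \<in> V \<and> w \<in> V \<and> v \<in> V \<and> E u w \<and> E w v"
  then obtain w where w: "u \<in> V" "w \<in> V" "v \<in> V" "E u w" "E w v" by blast
  have "is_walk V E [u,w,v]" unfolding is_walk_def using w
    by (auto simp: less_Suc_eq numeral_eq_Suc)
  then show "walkk 2 u v" by (intro exI[of _ "[u,w,v]"]) (auto simp: numeral_eq_Suc)
qed

lemma walk3I: assumes "u \<in> V" "a \<in> V" "b \<in> V" "v \<in> V" "E u a" "E a b" "E b v"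
  shows "walkk 3 u v"
proof -
  have "is_walk V E [u,a,b,v]" unfolding is_walk_def using assms
    by (auto simp: less_Suc_eq numeral_eq_Suc)
  then show ?thesis by (intro exI[of _ "[u,a,b,v]"]) (auto simp: numeral_eq_Suc)
qed


definition "compl x z \<longleftrightarrow> (\<forall>w\<in>V. cX EH z w = (\<not> cX EH x w))"

lemma free_idx: assumes "finite A" "card A < n" shows "\<exists>j\<in>{1..n}. j \<notin> A"
proof (rule ccontr)
  assume "\<not> ?thesis"
  then have "{1..n} \<subseteq> A" by auto
  then have "card {1..n} \<le> card A" using assms(1) by (rule card_mono[rotated])
  then show False using assms(2) by simp
qed

lemma compl_walk3: assumes "x \<in> V" "z \<in> V" "compl x z" shows "walkk 3 x z"
proof -
  obtain s i a h where x: "x = ((s,i,a),h)" by (metis prod.exhaust)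
  have i: "i \<in> {1..n}" "h \<in> VH" using assms(1) by (auto simp: x Vmem)
  obtain i' where i': "i' \<in> {1..n}" "i' \<notin> {i}" using free_idx[of "{i}"] n3 by auto
  have "card {i,i'} \<le> 2" by (simp add: card_insert_if)
  then obtain i3 where i3: "i3 \<in> {1..n}" "i3 \<notin> {i,i'}" using free_idx[of "{i,i'}"] n3
    by fastforce
  define y where "y = ((\<not> s, i', 0::nat), h)"
  define w where "w = ((s, i3, 0::nat), h)"
  have yV: "y \<in> V" using i i' pos by (auto simp: y_def Vmem)
  have wV: "w \<in> V" using i i3 pos by (auto simp: w_def Vmem)
  have cxy: "cX EH x y" using i' by (auto simp: x y_def cX_def)
  have cyw: "cX EH y w" using i' i3 by (auto simp: w_def y_def cX_def)
  have cxw: "\<not> cX EH x w" using i3 by (auto simp: w_def x cX_def)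
  have czw: "cX EH z w" using assms(3) wV cxw unfolding compl_def by blast
  have czy: "\<not> cX EH z y" using assms(3) yV cxy unfolding compl_def by blast
  have "w \<noteq> z" using czy cyw cX_sym by metis
  moreover have "x \<noteq> y" "y \<noteq> w" by (auto simp: x y_def w_def)
  ultimately have "E x y" "E y w" "E w z"
    using adj[OF assms(1) yV] adj[OF yV wV] adj[OF wV assms(2)] cxy cyw czw cX_sym[of w z] by auto
  then show ?thesis using walk3I[of x y w z] assms(1,2) yV wV by blast
qed

lemma PN: assumes "a \<in> V" "b \<in> V" "\<not> (\<forall>w\<in>V. cX EH a w = cX EH b w)"
  shows "\<exists>w\<in>V. cX EH b w \<and> \<not> cX EH a w"
proof -
  obtain w where w: "w \<in> V" "cX EH a w \<noteq> cX EH b w" using assms(3) by blast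
  show ?thesis
  proof (cases "cX EH b w")
    case True then show ?thesis using w by blast
  next
    case False then show ?thesis using w fl_V[of w] cX_fl by (intro bexI[of _ "fl w"]) auto
  qed
qed

lemma compl_fl: "compl x (fl x)"
  unfolding compl_def using cX_fl cX_sym by metis

lemma diam: assumes "u \<in> V" "v \<in> V" shows "\<exists>k\<le>3. walkk k u v"
proof (cases "u = v")
  case True then show ?thesis using walk0 assms by blast
next
  case uv: False
  show ?thesis
  proof (cases "cX EH u v")
    case True then have "walkk 1 u v" using walk1 adj assms uv by blast
    then show ?thesis by (intro exI[of _ "1::nat"] conjI) auto
  next
    case nuv: False
    have flu: "fl u \<in> V" using fl_V assms by blast
    show ?thesis
    proof (cases "\<forall>w\<in>V. cX EH (fl u) w = cX EH v w")
      case True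
      then have "compl u v" unfolding compl_def using cX_fl cX_sym by metis
      then show ?thesis using compl_walk3 assms by blast
    next
      case False
      then obtain w where w: "w \<in> V" "cX EH v w" "\<not> cX EH (fl u) w" using PN[OF flu assms(2)] by blast
      have cuw: "cX EH u w" using w(3) cX_fl cX_sym by metis
      have "w \<noteq> u" using w(2) nuv cX_sym[of u v] by auto
      moreover have "w \<noteq> v" using w(3) nuv cX_sym[of "fl u" v] cX_fl[of v u] cX_sym[of u v] by auto
      ultimately have "E u w" "E w v" using adj[OF assms(1) w(1)] adj[OF w(1) assms(2)] w cuw cX_sym[of w v] by auto
      then have "walkk 2 u v" using walk2 assms w(1) by blast
      then show ?thesis by (intro exI[of _ "2::nat"] conjI) auto
    qed
  qed
qed

lemma gdist_char: assumes "u \<in> V" "v \<in> V"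
  shows "gdist V E u v = (if u = v then 0 else if E u v then 1
           else if (\<exists>w\<in>V. E u w \<and> E w v) then 2 else 3)"
proof -
  obtain k0 where k0: "k0 \<le> 3" "walkk k0 u v" using diam assms by blast
  define d where "d = gdist V E u v"
  have dW: "walkk d u v" unfolding d_def gdist_def using k0(2) by (rule LeastI)
  have dle: "\<And>k. walkk k u v \<Longrightarrow> d \<le> k" unfolding d_def gdist_def by (rule Least_le)
  have d3: "d \<le> 3" using dle[OF k0(2)] k0(1) by simp
  have "d = (if u = v then 0 else if E u v then 1
           else if (\<exists>w\<in>V. E u w \<and> E w v) then 2 else 3)"
  proof (cases "u = v")
    case True
    have "d \<le> 0" using dle[of 0] walk0 assms True by blast
    then show ?thesis using True by simp
  next
    case uv: False
    have d0: "d \<noteq> 0"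
    proof
      assume "d = 0" then have "walkk 0 u v" using dW by simp
      then show False using walk0 uv by blast
    qed
    show ?thesis
    proof (cases "E u v")
      case True then show ?thesis using dle[of 1] walk1 assms d0 uv by auto
    next
      case nE: False
      have d1: "d \<noteq> 1"
      proof
        assume "d = 1" then have "walkk 1 u v" using dW by simp
        then show False using walk1 nE by blast
      qed
      show ?thesis
      proof (cases "\<exists>w\<in>V. E u w \<and> E w v")
        case True then have "walkk 2 u v" using walk2 assms by blast
        then show ?thesis using dle[of 2] d0 d1 True uv nE by auto
      next
        case False
        have "d \<noteq> 2"
        proof
          assume "d = 2" then have "walkk 2 u v" using dW by simp
          then show False using walk2 False by blast
        qed
        then show ?thesis using d0 d1 d3 False uv nE by auto
      qed
    qed
  qed
  then show ?thesis unfolding d_def .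
qed

abbreviation "NN h \<equiv> closed_nbhd VH EH h"
definition "RR h1 h2 \<longleftrightarrow> NN h2 = NN h1 \<or> NN h2 = VH - NN h1"

lemma N_sub: "h \<in> VH \<Longrightarrow> NN h \<subseteq> VH" unfolding closed_nbhd_def by auto
lemma N_mem: "h' \<in> VH \<Longrightarrow> (h' \<in> NN h) = (h = h' \<or> EH h h')" unfolding closed_nbhd_def by auto
lemma N_self: "h \<in> NN h" unfolding closed_nbhd_def by auto

lemma TP1: assumes "h1 \<in> VH" "h2 \<in> VH" shows "h2 \<in> T_part VH EH h1 \<longleftrightarrow> RR h1 h2"
proof
  assume "h2 \<in> T_part VH EH h1"
  then consider "h2 \<in> twin_class VH EH h1" | h' where "gamma_pair VH EH h1 h'" "h2 \<in> twin_class VH EH h'"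
    unfolding T_part_def by blast
  then show "RR h1 h2"
  proof cases
    case 1 then show ?thesis unfolding RR_def twin_class_def by auto
  next
    case 2
    have "NN h' \<subseteq> VH" using 2(1) N_sub unfolding gamma_pair_def by blast
    then have "NN h' = VH - NN h1" using 2(1) unfolding gamma_pair_def by blast
    then show ?thesis using 2(2) unfolding RR_def twin_class_def by auto
  qed
next
  assume "RR h1 h2"
  then consider "NN h2 = NN h1" | "NN h2 = VH - NN h1" unfolding RR_def by blast
  then show "h2 \<in> T_part VH EH h1"
  proof cases
    case 1 then show ?thesis using assms unfolding T_part_def twin_class_def by auto
  next
    case 2
    have "h1 \<noteq> h2" using 2 N_self by blast
    moreover have "NN h1 \<subseteq> VH" using assms N_sub by blast
    ultimately have "gamma_pair VH EH h1 h2" using assms 2 unfolding gamma_pair_def by blast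
    moreover have "h2 \<in> twin_class VH EH h2" using assms unfolding twin_class_def by auto
    ultimately show ?thesis unfolding T_part_def by blast
  qed
qed

lemma TP_sub: "T_part VH EH h \<subseteq> VH" unfolding T_part_def twin_class_def by auto

lemma RR_refl: "RR h h" unfolding RR_def by auto
lemma RR_sym: assumes "h1 \<in> VH" "h2 \<in> VH" "RR h1 h2" shows "RR h2 h1"
  using assms N_sub[OF assms(1)] N_sub[OF assms(2)] unfolding RR_def by blast
lemma RR_trans: assumes "h1 \<in> VH" "h2 \<in> VH" "h3 \<in> VH" "RR h1 h2" "RR h2 h3" shows "RR h1 h3"
  using assms N_sub[OF assms(1)] N_sub[OF assms(2)] N_sub[OF assms(3)] unfolding RR_def by blast

lemma TP_eq: assumes "h1 \<in> VH" "h2 \<in> VH" "RR h1 h2" shows "T_part VH EH h1 = T_part VH EH h2"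
proof -
  have "\<And>h. h \<in> VH \<Longrightarrow> RR h1 h \<longleftrightarrow> RR h2 h"
    using RR_sym RR_trans assms by meson
  then show ?thesis using TP1 assms TP_sub by blast
qed

definition "tc x y \<longleftrightarrow> (\<exists>c. \<forall>w\<in>V. cX EH y w = (cX EH x w = c))"

lemma block: assumes "((s1,i,a1),h1) \<in> V" "((s2,i,a2),h2) \<in> V" "RR h1 h2"
  shows "tc ((s1,i,a1),h1) ((s2,i,a2),h2)"
proof -
  have h: "h1 \<in> VH" "h2 \<in> VH" using assms by (auto simp: Vmem)
  consider "\<forall>h\<in>VH. (h \<in> NN h2) = (h \<in> NN h1)" | "\<forall>h\<in>VH. (h \<in> NN h2) = (h \<notin> NN h1)"
    using assms(3) unfolding RR_def by blast
  then show ?thesis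
  proof cases
    case 1
    have "\<forall>w\<in>V. cX EH ((s2,i,a2),h2) w = (cX EH ((s1,i,a1),h1) w = (s1 = s2))"
    proof
      fix w assume "w \<in> V"
      then obtain s i' a' h' where w: "w = ((s,i',a'),h')" "h' \<in> VH" by (cases w) (auto simp: Vmem)
      have "(h2 = h' \<or> EH h2 h') = (h1 = h' \<or> EH h1 h')" using 1 w(2) N_mem by blast
      then show "cX EH ((s2,i,a2),h2) w = (cX EH ((s1,i,a1),h1) w = (s1 = s2))"
        unfolding w cX_def by auto
    qed
    then show ?thesis unfolding tc_def by blast
  next
    case 2
    have "\<forall>w\<in>V. cX EH ((s2,i,a2),h2) w = (cX EH ((s1,i,a1),h1) w = (s1 \<noteq> s2))"
    proof
      fix w assume "w \<in> V"
      then obtain s i' a' h' where w: "w = ((s,i',a'),h')" "h' \<in> VH" by (cases w) (auto simp: Vmem)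
      have "(h2 = h' \<or> EH h2 h') = (\<not> (h1 = h' \<or> EH h1 h'))" using 2 w(2) N_mem by blast
      then show "cX EH ((s2,i,a2),h2) w = (cX EH ((s1,i,a1),h1) w = (s1 \<noteq> s2))"
        unfolding w cX_def by auto
    qed
    then show ?thesis unfolding tc_def by blast
  qed
qed

lemma gd_ne0: "u \<in> V \<Longrightarrow> v \<in> V \<Longrightarrow> u \<noteq> v \<Longrightarrow> gdist V E u v \<ge> 1 \<and> gdist V E u v \<le> 3"
  using gdist_char by auto

lemma E_sym: "u \<in> V \<Longrightarrow> v \<in> V \<Longrightarrow> E u v = E v u"
  using adj[of u v] adj[of v u] cX_sym[of u v] by auto

lemma NR: assumes "x \<in> V" "y \<in> V" "x \<noteq> y" "tc x y" "z \<in> V" "z \<noteq> x" "z \<noteq> y"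
  shows "\<not> strongly_resolves V E z x y"
proof -
  obtain c where c: "\<forall>w\<in>V. cX EH y w = (cX EH x w = c)" using assms(4) unfolding tc_def by blast
  show ?thesis
  proof (cases c)
    case True
    then have tw: "\<forall>w\<in>V. cX EH y w = cX EH x w" using c by simp
    have "cX EH y x" using tw assms(1) cX_refl[of x] by auto
    then have Exy: "E x y" using adj[OF assms(1,2)] assms(3) cX_sym[of x y] by auto
    then have Eyx: "E y x" using E_sym assms(1,2) by blast
    have dxy: "gdist V E x y = 1" "gdist V E y x = 1"
      using gdist_char[OF assms(1,2)] gdist_char[OF assms(2,1)] Exy Eyx assms(3) by auto
    have EE: "E x z = E y z" using adj[OF assms(1,5)] adj[OF assms(2,5)] tw assms(5-7) by auto
    have CN: "\<not> E x z \<Longrightarrow> (\<exists>w\<in>V. E x w \<and> E w z) = (\<exists>w\<in>V. E y w \<and> E w z)"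
    proof -
      assume nE: "\<not> E x z"
      have 1: "E x w = E y w" if "w \<in> V" "w \<noteq> x" "w \<noteq> y" for w
        using adj[OF assms(1) that(1)] adj[OF assms(2) that(1)] tw that by auto
      show ?thesis
      proof
        assume "\<exists>w\<in>V. E x w \<and> E w z"
        then obtain w where w: "w \<in> V" "E x w" "E w z" by blast
        have "w \<noteq> y" using w nE EE by blast
        moreover have "w \<noteq> x" using w adj[OF assms(1) w(1)] by blast
        ultimately show "\<exists>w\<in>V. E y w \<and> E w z" using 1 w by blast
      next
        assume "\<exists>w\<in>V. E y w \<and> E w z"
        then obtain w where w: "w \<in> V" "E y w" "E w z" by blast
        have "w \<noteq> x" using w nE EE by blast
        moreover have "w \<noteq> y" using w adj[OF assms(2) w(1)] by blast
        ultimately show "\<exists>w\<in>V. E x w \<and> E w z" using 1 w by blast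
      qed
    qed
    have "gdist V E x z = gdist V E y z"
      using gdist_char[OF assms(1,5)] gdist_char[OF assms(2,5)] EE CN assms(6,7) by auto
    then show ?thesis unfolding strongly_resolves_def using dxy by auto
  next
    case False
    then have co: "\<forall>w\<in>V. cX EH y w = (\<not> cX EH x w)" using c by simp
    have "\<not> cX EH y x" using co assms(1) cX_refl[of x] by auto
    then have nE: "\<not> E x y" "\<not> E y x" using adj[OF assms(1,2)] adj[OF assms(2,1)] cX_sym[of x y] by auto
    have nCN: "\<not> (\<exists>w\<in>V. E x w \<and> E w y)" "\<not> (\<exists>w\<in>V. E y w \<and> E w x)"
    proof -
      have "\<not> (cX EH x w \<and> cX EH y w)" if "w \<in> V" for w using co that by auto
      then show "\<not> (\<exists>w\<in>V. E x w \<and> E w y)" "\<not> (\<exists>w\<in>V. E y w \<and> E w x)"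
        using adj assms(1,2) cX_sym by blast+
    qed
    have dxy: "gdist V E x y = 3" "gdist V E y x = 3"
      using gdist_char[OF assms(1,2)] gdist_char[OF assms(2,1)] nE nCN assms(3) by auto
    have "gdist V E x z \<ge> 1 \<and> gdist V E x z \<le> 3" "gdist V E y z \<ge> 1 \<and> gdist V E y z \<le> 3"
      using gd_ne0 assms by auto
    then show ?thesis unfolding strongly_resolves_def using dxy by auto
  qed
qed

lemma UR: assumes "x \<in> V" "y \<in> V" "\<not> tc x y"
  shows "strongly_resolves V E (fl x) x y"
proof -
  define z where "z = fl x"
  have zV: "z \<in> V" using fl_V assms(1) z_def by blast
  have co: "\<And>w. cX EH z w = (\<not> cX EH x w)"
  proof -
    fix w show "cX EH z w = (\<not> cX EH x w)"
      unfolding z_def using cX_fl[of w x] cX_sym[of "fl x" w] cX_sym[of w x] by auto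
  qed
  have ntw: "\<not> (\<forall>w\<in>V. cX EH x w = cX EH y w)"
  proof
    assume "\<forall>w\<in>V. cX EH x w = cX EH y w"
    then have "\<forall>w\<in>V. cX EH y w = (cX EH x w = True)" by auto
    then show False using assms(3) unfolding tc_def by blast
  qed
  have ntw2: "\<not> (\<forall>w\<in>V. cX EH z w = cX EH y w)"
  proof
    assume "\<forall>w\<in>V. cX EH z w = cX EH y w"
    then have "\<forall>w\<in>V. cX EH y w = (cX EH x w = False)" using co by auto
    then show False using assms(3) unfolding tc_def by blast
  qed
  have yx: "y \<noteq> x" using ntw by blast
  have yz: "y \<noteq> z" using ntw2 by blast
  have "\<not> cX EH z x" using co cX_refl[of x] by auto
  then have xz: "x \<noteq> z" and nExz: "\<not> E x z" using cX_refl[of x] adj[OF assms(1) zV] cX_sym[of x z] by auto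
  have nCNxz: "\<not> (\<exists>w\<in>V. E x w \<and> E w z)"
  proof -
    have "\<not> (cX EH x w \<and> cX EH w z)" if "w \<in> V" for w using co cX_sym[of w z] by auto
    moreover have "cX EH x w \<and> cX EH w z" if "w \<in> V" "E x w" "E w z" for w
      using that adj[OF assms(1) that(1)] adj[OF that(1) zV] by auto
    ultimately show ?thesis by blast
  qed
  have dxz: "gdist V E x z = 3" using gdist_char[OF assms(1) zV] xz nExz nCNxz by auto
  show ?thesis
  proof (cases "cX EH x y")
    case True
    have Exy: "E x y" using True adj[OF assms(1,2)] yx by auto
    have d1: "gdist V E x y = 1" using gdist_char[OF assms(1,2)] Exy yx by auto
    have nEyz: "\<not> E y z" using co True adj[OF assms(2) zV] cX_sym[of y z] by auto
    obtain w where w: "w \<in> V" "cX EH y w" "\<not> cX EH x w" using PN[OF assms(1,2) ntw] by blast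
    have "w \<noteq> y" using w True by blast
    moreover have "w \<noteq> z" using w nEyz adj[OF assms(2) zV] yz by blast
    ultimately have "E y w" "E w z" using w adj[OF assms(2) w(1)] adj[OF w(1) zV] co cX_sym[of w z] by auto
    then have d2: "gdist V E y z = 2" using gdist_char[OF assms(2) zV] nEyz yz w(1) by auto
    show ?thesis unfolding strongly_resolves_def z_def[symmetric] using dxz d1 d2 by auto
  next
    case False
    have Ezy: "E z y" using False co adj[OF zV assms(2)] yz by auto
    have d1: "gdist V E y z = 1" using gdist_char[OF assms(2) zV] Ezy E_sym[OF zV assms(2)] yz by auto
    have nExy: "\<not> E x y" using False adj[OF assms(1,2)] by auto
    obtain w where w: "w \<in> V" "cX EH y w" "\<not> cX EH z w" using PN[OF zV assms(2) ntw2] by blast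
    have cxw: "cX EH x w" using w(3) co by blast
    have "w \<noteq> y" using w Ezy adj[OF zV assms(2)] by blast
    moreover have "w \<noteq> x" using w(2) False cX_sym[of x y] by auto
    ultimately have "E x w" "E w y" using w cxw adj[OF assms(1) w(1)] adj[OF w(1) assms(2)] cX_sym[of w y] by auto
    then have d2: "gdist V E x y = 2" using gdist_char[OF assms(1,2)] nExy yx w(1) by auto
    show ?thesis unfolding strongly_resolves_def z_def[symmetric] using dxz d1 d2 by auto
  qed
qed


abbreviation "TP \<equiv> T_partition VH EH"
definition "rep T = (SOME h. h \<in> T)"
definition "W0 = (\<lambda>(i,h). ((False,i,0::nat),h)) ` ({1..n} \<times> rep ` TP)"

lemma TP_self: "h \<in> VH \<Longrightarrow> h \<in> T_part VH EH h" using TP1 RR_refl by blast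

lemma rep_in: "T \<in> TP \<Longrightarrow> rep T \<in> T \<and> T = T_part VH EH (rep T) \<and> rep T \<in> VH"
proof -
  assume "T \<in> TP"
  then obtain h where h: "h \<in> VH" "T = T_part VH EH h" unfolding T_partition_def by blast
  then have "rep T \<in> T" unfolding rep_def using TP_self by (metis someI_ex)
  moreover have "rep T \<in> VH" using calculation h TP_sub by blast
  moreover have "RR h (rep T)" using h calculation TP1 by blast
  ultimately show ?thesis using TP_eq h by blast
qed

lemma rep_inj: "inj_on rep TP"
proof
  fix T T' assume T: "T \<in> TP" "T' \<in> TP" "rep T = rep T'"
  show "T = T'" using rep_in[OF T(1)] rep_in[OF T(2)] T(3) by metis
qed

lemma finTP: "finite TP" unfolding T_partition_def using finVH by blast

lemma card_W0: "card W0 = n * card TP"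
proof -
  have "inj_on (\<lambda>(i,h). ((False,i,0::nat),h)) ({1..n} \<times> rep ` TP)" by (auto simp: inj_on_def)
  then have "card W0 = card ({1..n} \<times> rep ` TP)" unfolding W0_def by (rule card_image)
  also have "\<dots> = n * card TP" using card_image[OF rep_inj] by (simp add: card_cartesian_product)
  finally show ?thesis .
qed

lemma W0_sub: "W0 \<subseteq> V"
  using pos rep_in unfolding W0_def by (auto simp: Vmem)

lemma W_ntc: assumes "i \<in> {1..n}" "i' \<in> {1..n}" "h \<in> VH" "h' \<in> VH" "(i,h) \<noteq> (i',h')"
   "i = i' \<Longrightarrow> \<not> RR h h'"
  shows "\<not> tc ((False,i,0),h) ((False,i',0),h')"
proof
  assume "tc ((False,i,0),h) ((False,i',0),h')"
  then obtain c where c: "\<forall>w\<in>V. cX EH ((False,i',0),h') w = (cX EH ((False,i,0),h) w = c)"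
    unfolding tc_def by blast
  show False
  proof (cases "i = i'")
    case False
    have "card {i,i'} \<le> 2" by (simp add: card_insert_if)
    then obtain i3 where i3: "i3 \<in> {1..n}" "i3 \<notin> {i,i'}" using free_idx[of "{i,i'}"] n3
      by fastforce
    have xV: "((False,i,0),h) \<in> V" using assms pos by (auto simp: Vmem)
    have w3V: "((False,i3,0),h) \<in> V" using i3 assms pos by (auto simp: Vmem)
    show False using c[rule_format, OF xV] c[rule_format, OF w3V] False i3
      by (auto simp: cX_def)
  next
    case True
    then have hh: "h \<noteq> h'" using assms(5) by auto
    have eq: "(h' = hw \<or> EH h' hw) = ((h = hw \<or> EH h hw) = c)" if "hw \<in> VH" for hw
    proof -
      have "((False,i,0),hw) \<in> V" using assms pos that by (auto simp: Vmem)
      then show ?thesis using c True by (auto simp: cX_def)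
    qed
    have "RR h h'"
    proof (cases c)
      case True
      have "NN h' = NN h"
      proof (rule set_eqI)
        fix hw show "hw \<in> NN h' \<longleftrightarrow> hw \<in> NN h"
          using eq[of hw] True N_mem[of hw] N_sub assms(3,4) by blast
      qed
      then show ?thesis unfolding RR_def by blast
    next
      case False
      have "NN h' = VH - NN h"
      proof (rule set_eqI)
        fix hw show "hw \<in> NN h' \<longleftrightarrow> hw \<in> VH - NN h"
          using eq[of hw] False N_mem[of hw] N_sub assms(3,4) by blast
      qed
      then show ?thesis unfolding RR_def by blast
    qed
    then show False using assms(6) True by blast
  qed
qed

lemma finKV: "finite (KnnM_vert n q r)"
proof -
  have "KnnM_vert n q r \<subseteq> UNIV \<times> {1..n} \<times> {..< (\<Sum>i\<in>{1..n}. q i + r i)}"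
  proof
    fix x assume x: "x \<in> KnnM_vert n q r"
    obtain s i a where xx: "x = (s,i,a)" by (metis prod.exhaust)
    have i: "i \<in> {1..n}" and a: "a < q i + r i" using x by (auto simp: xx KV_mem split: if_splits)
    have "q i + r i \<le> (\<Sum>i\<in>{1..n}. q i + r i)" using i by (intro member_le_sum) auto
    then show "x \<in> UNIV \<times> {1..n} \<times> {..< (\<Sum>i\<in>{1..n}. q i + r i)}" using i a xx by auto
  qed
  then show ?thesis by (rule finite_subset) auto
qed

lemma finV: "finite V" unfolding mod_prod_vert_def using finKV finVH by blast

lemma upper: "strong_resolving_set V E (V - W0)"
  unfolding strong_resolving_set_def
proof (intro conjI ballI impI)
  show "V - W0 \<subseteq> V" by blast
  fix x y assume xy: "x \<in> V" "y \<in> V" "x \<noteq> y"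
  show "\<exists>z\<in>V - W0. strongly_resolves V E z x y"
  proof (cases "x \<in> W0")
    case False
    have "gdist V E x x = 0" using gdist_char xy by auto
    then have "strongly_resolves V E x x y" unfolding strongly_resolves_def by simp
    then show ?thesis using False xy by blast
  next
    case xW: True
    show ?thesis
    proof (cases "y \<in> W0")
      case False
      have "gdist V E y y = 0" using gdist_char xy by auto
      then have "strongly_resolves V E y x y" unfolding strongly_resolves_def by simp
      then show ?thesis using False xy by blast
    next
      case yW: True
      obtain i h where x: "x = ((False,i,0),h)" "i \<in> {1..n}" "h \<in> rep ` TP" using xW unfolding W0_def by auto
      obtain i' h' where y: "y = ((False,i',0),h')" "i' \<in> {1..n}" "h' \<in> rep ` TP" using yW unfolding W0_def by auto
      obtain T where T: "T \<in> TP" "h = rep T" using x by blast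
      obtain T' where T': "T' \<in> TP" "h' = rep T'" using y by blast
      have hV: "h \<in> VH" "h' \<in> VH" using rep_in T T' by auto
      have "i = i' \<Longrightarrow> \<not> RR h h'"
      proof
        assume "i = i'" "RR h h'"
        then have "T = T'" using rep_in[OF T(1)] rep_in[OF T'(1)] TP_eq hV T T' by metis
        then show False using xy(3) x y T T' \<open>i = i'\<close> by simp
      qed
      then have "\<not> tc x y" using W_ntc[OF x(2) y(2) hV] xy(3) x(1) y(1) by blast
      then have "strongly_resolves V E (fl x) x y" using UR xy by blast
      moreover have "fl x \<in> V - W0" using fl_V[OF xy(1)] unfolding W0_def by (auto simp: fl_def x)
      ultimately show ?thesis by blast
    qed
  qed
qed

lemma lower: assumes "strong_resolving_set V E S" shows "card V - n * card TP \<le> card S"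
proof -
  have SV: "S \<subseteq> V" using assms unfolding strong_resolving_set_def by blast
  define f where "f = (\<lambda>x::(bool\<times>nat\<times>nat)\<times>'b. (fst (snd (fst x)), T_part VH EH (snd x)))"
  have inj: "inj_on f (V - S)"
  proof
    fix x y assume x: "x \<in> V - S" and y: "y \<in> V - S" and fxy: "f x = f y"
    obtain s1 i1 a1 h1 where xx: "x = ((s1,i1,a1),h1)" by (metis prod.exhaust)
    obtain s2 i2 a2 h2 where yy: "y = ((s2,i2,a2),h2)" by (metis prod.exhaust)
    have hV: "h1 \<in> VH" "h2 \<in> VH" using x y by (auto simp: xx yy Vmem)
    have ii: "i1 = i2" and TT: "T_part VH EH h1 = T_part VH EH h2" using fxy by (auto simp: f_def xx yy)
    have "RR h1 h2" using TT TP_self[OF hV(2)] TP1 hV by blast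
    then have tcxy: "tc x y" using block[of s1 i1 a1 h1 s2 a2 h2] x y by (simp add: xx yy ii)
    show "x = y"
    proof (rule ccontr)
      assume "x \<noteq> y"
      then obtain z where z: "z \<in> S" "strongly_resolves V E z x y"
        using assms x y unfolding strong_resolving_set_def by blast
      have "z \<noteq> x" "z \<noteq> y" using z x y by auto
      then show False using NR[of x y z] z SV x y tcxy \<open>x \<noteq> y\<close> by blast
    qed
  qed
  have img: "f ` (V - S) \<subseteq> {1..n} \<times> TP"
    unfolding f_def T_partition_def by (auto simp: mod_prod_vert_def KnnM_vert_def)
  have "card (V - S) \<le> card ({1..n} \<times> TP)"
    using card_inj_on_le[OF inj img] finTP by simp
  then have "card (V - S) \<le> n * card TP" by (simp add: card_cartesian_product)
  moreover have "card (V - S) = card V - card S" using card_Diff_subset[OF finite_subset[OF SV finV] SV] .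
  moreover have "card S \<le> card V" using card_mono[OF finV SV] .
  ultimately show ?thesis by linarith
qed

lemma smd: "strong_metric_dim V E = card V - n * card TP"
  unfolding strong_metric_dim_def
proof (rule Least_equality)
  have "card (V - W0) = card V - n * card TP"
    using card_Diff_subset[OF finite_subset[OF W0_sub finV] W0_sub] card_W0 by simp
  then show "\<exists>S. strong_resolving_set V E S \<and> card S = card V - n * card TP" using upper by blast
next
  fix k assume "\<exists>S. strong_resolving_set V E S \<and> card S = k"
  then show "card V - n * card TP \<le> k" using lower by blast
qed

lemma nk_le: "n * card TP \<le> card V"
  using card_mono[OF finV W0_sub] card_W0 by simp

lemma card_KV: "card (KnnM_vert n q r) = (\<Sum>i=1..n. q i + r i)"
proof -
  have eq: "KnnM_vert n q r = (\<lambda>(i,a). (False,i,a)) ` (SIGMA i:{1..n}. {..<q i})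
                          \<union> (\<lambda>(i,a). (True,i,a)) ` (SIGMA i:{1..n}. {..<r i})"
    unfolding KnnM_vert_def by auto
  have c1: "card ((\<lambda>(i,a). (False,i,a)) ` (SIGMA i:{1..n}. {..<q i})) = (\<Sum>i=1..n. q i)"
    by (subst card_image) (auto simp: inj_on_def)
  have c2: "card ((\<lambda>(i,a). (True,i,a)) ` (SIGMA i:{1..n}. {..<r i})) = (\<Sum>i=1..n. r i)"
    by (subst card_image) (auto simp: inj_on_def)
  have "card (KnnM_vert n q r) = card ((\<lambda>(i,a). (False,i,a)) ` (SIGMA i:{1..n}. {..<q i}))
      + card ((\<lambda>(i,a). (True,i,a)) ` (SIGMA i:{1..n}. {..<r i}))"
    unfolding eq by (rule card_Un_disjoint) auto
  then show ?thesis unfolding c1 c2 by (simp add: sum.distrib)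
qed

lemma sum_TP: "(\<Sum>T\<in>TP. card T) = card VH"
proof -
  have "pairwise disjnt TP"
  proof (rule pairwiseI)
    fix T T' assume T: "T \<in> TP" "T' \<in> TP" "T \<noteq> T'"
    show "disjnt T T'"
    proof (rule ccontr)
      assume "\<not> disjnt T T'"
      then obtain x where "x \<in> T" "x \<in> T'" unfolding disjnt_def by blast
      then show False using T rep_in TP1 TP_eq TP_sub by (metis subsetD)
    qed
  qed
  moreover have "\<And>A. A \<in> TP \<Longrightarrow> finite A" using TP_sub finVH finite_subset unfolding T_partition_def by blast
  ultimately have "card (\<Union>TP) = (\<Sum>T\<in>TP. card T)" by (rule card_Union_disjoint)
  moreover have "\<Union>TP = VH" using TP_sub TP_self unfolding T_partition_def by blast
  ultimately show ?thesis by simp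
qed


end

theorem mainTheorem11:
  fixes n :: nat and q r :: "nat \<Rightarrow> nat"
    and VH :: "'b set" and EH :: "'b \<Rightarrow> 'b \<Rightarrow> bool"
  assumes "n \<ge> 3"
    and "\<forall>i\<in>{1..n}. q i > 0 \<and> r i > 0"
    and "sgraph VH EH"
    and "\<not> (\<exists>h. universal_vertex VH EH h)"
  shows "int (strong_metric_dim (mod_prod_vert (KnnM_vert n q r) VH)
                                (mod_prod_edge (KnnM_edge n q r) EH))
         = (\<Sum>i=1..n. int (q i + r i) * (\<Sum>T\<in>T_partition VH EH. int (card T)))
           - int n * int (k_H VH EH)"
proof -
  interpret kprod n q r VH EH using assms(1-3) by unfold_locales
  have cV: "card (mod_prod_vert (KnnM_vert n q r) VH) = (\<Sum>i=1..n. q i + r i) * card VH"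
    unfolding mod_prod_vert_def by (simp add: card_cartesian_product card_KV)
  have "(\<Sum>T\<in>T_partition VH EH. int (card T)) = int (card VH)"
    using sum_TP by (metis of_nat_sum)
  then have "(\<Sum>i=1..n. int (q i + r i) * (\<Sum>T\<in>T_partition VH EH. int (card T)))
       = int ((\<Sum>i=1..n. q i + r i) * card VH)"
    by (simp add: sum_distrib_right[symmetric] of_nat_mult)
  then show ?thesis using smd nk_le cV unfolding k_H_def by (simp add: of_nat_diff)
qed

end
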